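(* Let $L$ be an allowable $2l$-cycle chain for $\mathcal H_{m,\mathcal B,S}$. Then the number of distinct $2l$-cycles in the Tanner graph of $\mathcal H_{m,\mathcal B,S}$ corresponding to $L$ equals $m/n(L)$.
   Context: Let $m\ge1$, $\mathcal B=[B_1,\ldots,B_k]$ a list of subsets of a finite set of row-block indices, and $s_{i,j}\in\mathbb{Z}_m$ for $i\in B_j$. $\mathcal H_{m,\mathcal B,S}$ is the block matrix whose $(i,j)$ block is the $m\times m$ circulant permutation matrix with entry $(x,y)$ equal to 1 iff $x\equiv y+s_{i,j}\pmod m$ when $i\in B_j$, and zero otherwise; its Tanner graph has check nodes $c(i,x)$, variable nodes $u(j,y)$, with $c(i,x)\sim u(j,y)$ iff $i\in B_j$ and $x\equiv y+s_{i,j}$. A $2l$-cycle chain ($l\ge2$) is $L=(i_0,j_0,\ldots,i_{l-1},j_{l-1})$, indices mod $l$, with $i_t,i_{t+1}\in B_{j_t}$, $i_t\ne i_{t+1}$, $j_t\ne j_{t+1}$, and $\sum_{t=0}^{l-1}(s_{i_t,j_t}-s_{i_{t+1},j_t})\equiv0\pmod m$. For $r\in\mathbb{Z}_m$: $x_0=r$, $y_t=x_t-s_{i_t,j_t}$, $x_{t+1}=y_t+s_{i_{t+1},j_t}$ (mod $m$), giving the closed walk $W_r=c(i_0,x_0),u(j_0,y_0),c(i_1,x_1),\ldots,u(j_{l-1},y_{l-1}),c(i_0,x_0)$; $L$ is allowable if for every $r$ the $2l$ vertices $c(i_t,x_t),u(j_t,y_t)$ are pairwise distinct, in which case $W_r$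 traces a $2l$-cycle (a subgraph) of the Tanner graph. A $2l$-cycle of the Tanner graph corresponds to $L$ if it is the cycle traced by $W_r$ for some $r\in\mathbb{Z}_m$. Let $e$ be the smallest integer in $\{1,\ldots,l\}$ such that $(i_{t+e},j_{t+e})=(i_t,j_t)$ for all $t$ (indices mod $l$); then $e\mid l$ and $n(L)=l/e$. *)

theory Defs
  imports Complex_Main
begin

text \<open>Vertices of the Tanner graph: check nodes c(i,x) and variable nodes u(j,y).
  Row-block indices i and column-block indices j are naturals; the list
  B = [B_0,...,B_(k-1)] is indexed from 0 (B ! j). Elements of Z_m are
  represented by integers in {0..<m} (residues mod m). The shifts s i j are
  arbitrary integers, read modulo m.\<close>

datatype vertex = CNode nat int | UNode nat int

definition tanner_adj :: "int \<Rightarrow> nat set list \<Rightarrow> (nat \<Rightarrow> nat \<Rightarrow> int) \<Rightarrow> vertex \<Rightarrow> vertex \<Rightarrow> bool" where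
  "tanner_adj m B s v w \<longleftrightarrow>
     (\<exists>i x j y. {v, w} = {CNode i x, UNode j y} \<and> 0 \<le> x \<and> x < m \<and> 0 \<le> y \<and> y < m \<and>
        j < length B \<and> i \<in> B ! j \<and> x mod m = (y + s i j) mod m)"

text \<open>A chain L = (i_0,j_0,...,i_(l-1),j_(l-1)) is the list of pairs (i_t,j_t);
  indices are taken mod l.\<close>
definition ch_i :: "(nat \<times> nat) list \<Rightarrow> nat \<Rightarrow> nat" where
  "ch_i L t = fst (L ! (t mod length L))"

definition ch_j :: "(nat \<times> nat) list \<Rightarrow> nat \<Rightarrow> nat" where
  "ch_j L t = snd (L ! (t mod length L))"

definition is_cycle_chain :: "int \<Rightarrow> nat set list \<Rightarrow> (nat \<Rightarrow> nat \<Rightarrow> int) \<Rightarrow> (nat \<times> nat) list \<Rightarrow> bool" where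
  "is_cycle_chain m B s L \<longleftrightarrow>
     length L \<ge> 2 \<and>
     (\<forall>t < length L. ch_j L t < length B \<and>
        ch_i L t \<in> B ! ch_j L t \<and> ch_i L (Suc t) \<in> B ! ch_j L t \<and>
        ch_i L t \<noteq> ch_i L (Suc t) \<and> ch_j L t \<noteq> ch_j L (Suc t)) \<and>
     (\<Sum>t<length L. s (ch_i L t) (ch_j L t) - s (ch_i L (Suc t)) (ch_j L t)) mod m = 0"

primrec walk_x :: "int \<Rightarrow> (nat \<Rightarrow> nat \<Rightarrow> int) \<Rightarrow> (nat \<times> nat) list \<Rightarrow> int \<Rightarrow> nat \<Rightarrow> int" where
  "walk_x m s L r 0 = r mod m"
| "walk_x m s L r (Suc t) =
     (walk_x m s L r t - s (ch_i L t) (ch_j L t) + s (ch_i L (Suc t)) (ch_j L t)) mod m"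

definition walk_y :: "int \<Rightarrow> (nat \<Rightarrow> nat \<Rightarrow> int) \<Rightarrow> (nat \<times> nat) list \<Rightarrow> int \<Rightarrow> nat \<Rightarrow> int" where
  "walk_y m s L r t = (walk_x m s L r t - s (ch_i L t) (ch_j L t)) mod m"

definition walk_vertex :: "int \<Rightarrow> (nat \<Rightarrow> nat \<Rightarrow> int) \<Rightarrow> (nat \<times> nat) list \<Rightarrow> int \<Rightarrow> nat \<Rightarrow> vertex" where
  "walk_vertex m s L r n =
     (if even n then CNode (ch_i L (n div 2)) (walk_x m s L r (n div 2))
      else UNode (ch_j L (n div 2)) (walk_y m s L r (n div 2)))"

definition allowable :: "int \<Rightarrow> nat set list \<Rightarrow> (nat \<Rightarrow> nat \<Rightarrow> int) \<Rightarrow> (nat \<times> nat) list \<Rightarrow> bool" where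
  "allowable m B s L \<longleftrightarrow> is_cycle_chain m B s L \<and>
     (\<forall>r\<in>{0..<m}. inj_on (walk_vertex m s L r) {0..<2 * length L})"

text \<open>The cycle (subgraph) traced by W_r, given by its set of edges
  {v_n, v_(n+1 mod 2l)}; its vertex set is the union of the edges.\<close>
definition traced_cycle :: "int \<Rightarrow> (nat \<Rightarrow> nat \<Rightarrow> int) \<Rightarrow> (nat \<times> nat) list \<Rightarrow> int \<Rightarrow> vertex set set" where
  "traced_cycle m s L r =
     (\<lambda>n. {walk_vertex m s L r n, walk_vertex m s L r ((Suc n) mod (2 * length L))})
       ` {0..<2 * length L}"

definition corresponding_cycles :: "int \<Rightarrow> (nat \<Rightarrow> nat \<Rightarrow> int) \<Rightarrow> (nat \<times> nat) list \<Rightarrow> vertex set set set" where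
  "corresponding_cycles m s L = traced_cycle m s L ` {0..<m}"

definition chain_period :: "(nat \<times> nat) list \<Rightarrow> nat" where
  "chain_period L = (LEAST e. 1 \<le> e \<and> e \<le> length L \<and>
      (\<forall>t. L ! ((t + e) mod length L) = L ! (t mod length L)))"

definition chain_n :: "(nat \<times> nat) list \<Rightarrow> nat" where
  "chain_n L = length L div chain_period L"

end

theory Submission
  imports Defs
begin

definition edges :: "(nat \<Rightarrow> 'a) \<Rightarrow> nat \<Rightarrow> 'a set set" where
  "edges V N = (\<lambda>n. {V n, V (Suc n)}) ` {0..<N}"

definition isperV :: "(nat \<Rightarrow> 'a) \<Rightarrow> nat \<Rightarrow> bool" where
  "isperV V N \<longleftrightarrow> (\<forall>n. V (n + N) = V n)"

lemma per_mod: assumes "isperV V N" shows "V n = V (n mod N)"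
proof -
  have "\<And>c. V (k + c * N) = V k" for k
  proof -
    fix c show "V (k + c * N) = V k"
    proof (induction c)
      case (Suc c)
      have "k + Suc c * N = (k + c * N) + N" by simp
      then show ?case using Suc assms unfolding isperV_def by metis
    qed simp
  qed
  then show ?thesis by (metis mod_div_mult_eq)
qed

lemma per_modeq: "isperV V N \<Longrightarrow> a mod N = b mod N \<Longrightarrow> V a = V b"
proof -
  assume p: "isperV V N" and e: "a mod N = b mod N"
  have "V a = V (a mod N)" by (rule per_mod[OF p])
  also have "\<dots> = V (b mod N)" using e by simp
  also have "\<dots> = V b" by (rule per_mod[OF p, symmetric])
  finally show ?thesis .
qed

lemma V_eq_iff: assumes "isperV V N" "inj_on V {0..<N}" "N > 0"
  shows "V a = V b \<longleftrightarrow> a mod N = b mod N"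
proof
  assume "V a = V b"
  then have "V (a mod N) = V (b mod N)" using per_mod[OF assms(1), of a] per_mod[OF assms(1), of b] by simp
  moreover have "a mod N \<in> {0..<N}" "b mod N \<in> {0..<N}" using assms(3) by auto
  ultimately show "a mod N = b mod N" using assms(2) inj_onD by metis
qed (rule per_modeq[OF assms(1)])

lemma edges_range: assumes "isperV V N" "N > 0"
  shows "edges V N = range (\<lambda>n. {V n, V (Suc n)})"
proof
  show "range (\<lambda>n. {V n, V (Suc n)}) \<subseteq> edges V N"
  proof
    fix x assume "x \<in> range (\<lambda>n. {V n, V (Suc n)})"
    then obtain n where x: "x = {V n, V (Suc n)}" by auto
    have "V n = V (n mod N)" by (rule per_mod[OF assms(1)])
    moreover have "V (Suc n) = V (Suc (n mod N))"
      by (rule per_modeq[OF assms(1)]) (simp add: mod_Suc_eq)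
    ultimately have "x = {V (n mod N), V (Suc (n mod N))}" using x by simp
    moreover have "n mod N \<in> {0..<N}" using assms(2) by simp
    ultimately show "x \<in> edges V N" unfolding edges_def by blast
  qed
qed (auto simp: edges_def)

lemma edges_shift: assumes "isperV V N" "N > 0"
  shows "edges (\<lambda>k. V (q + k)) N = edges V N"
proof -
  have p2: "isperV (\<lambda>k. V (q + k)) N" using assms(1) unfolding isperV_def
    by (metis add.assoc)
  have "range (\<lambda>n. {V (q + n), V (q + Suc n)}) = range (\<lambda>n. {V n, V (Suc n)})"
  proof
    show "range (\<lambda>n. {V n, V (Suc n)}) \<subseteq> range (\<lambda>n. {V (q + n), V (q + Suc n)})"
    proof
      fix x assume "x \<in> range (\<lambda>n. {V n, V (Suc n)})"
      then obtain n where x: "x = {V n, V (Suc n)}" by auto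
      have e: "q + (n + (N - 1) * q) = n + N * q" using assms(2)
        by (cases N) auto
      have "V (q + (n + (N - 1) * q)) = V n"
        by (rule per_modeq[OF assms(1)]) (simp only: e, simp)
      moreover have "V (q + Suc (n + (N - 1) * q)) = V (Suc n)"
      proof (rule per_modeq[OF assms(1)])
        have "q + Suc (n + (N - 1) * q) = Suc (q + (n + (N - 1) * q))" by (rule add_Suc_right)
        also have "\<dots> = Suc n + N * q" by (simp only: e)
        finally have "q + Suc (n + (N - 1) * q) = Suc n + N * q" .
        then show "(q + Suc (n + (N - 1) * q)) mod N = Suc n mod N" by (simp only:) simp
      qed
      ultimately have "x = (\<lambda>n. {V (q + n), V (q + Suc n)}) (n + (N - 1) * q)" using x by simp
      then show "x \<in> range (\<lambda>n. {V (q + n), V (q + Suc n)})" by blast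
    qed
  qed auto
  then show ?thesis using edges_range[OF assms] edges_range[OF p2 assms(2)] by simp
qed

lemma Suc_mod_cancel: assumes "N > 0" "Suc a mod N = Suc b mod N" shows "a mod N = b mod N"
proof -
  have "a mod N = (Suc a + (N - 1)) mod N" using assms(1) by simp
  also have "\<dots> = (Suc a mod N + (N - 1)) mod N" by (simp add: mod_add_left_eq)
  also have "\<dots> = (Suc b mod N + (N - 1)) mod N" using assms(2) by simp
  also have "\<dots> = (Suc b + (N - 1)) mod N" by (simp add: mod_add_left_eq)
  also have "\<dots> = b mod N" using assms(1) by simp
  finally show ?thesis .
qed

lemma nbrs: assumes "isperV V N" "inj_on V {0..<N}" "N > 0"
  shows "{w. {V q, w} \<in> edges V N} = {V (Suc q), V (q + N - 1)}"
proof -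
  note eq = V_eq_iff[OF assms]
  have "{V q, w} \<in> edges V N \<longleftrightarrow> w = V (Suc q) \<or> w = V (q + N - 1)" for w
  proof
    assume "{V q, w} \<in> edges V N"
    then obtain n where n: "n < N" "{V q, w} = {V n, V (Suc n)}" unfolding edges_def by auto
    then have "(V q = V n \<and> w = V (Suc n)) \<or> (V q = V (Suc n) \<and> w = V n)"
      by (simp add: doubleton_eq_iff)
    then show "w = V (Suc q) \<or> w = V (q + N - 1)"
    proof
      assume h: "V q = V n \<and> w = V (Suc n)"
      then have "q mod N = n mod N" using eq by blast
      then have "Suc n mod N = Suc q mod N" by (metis mod_Suc_eq)
      then have "V (Suc n) = V (Suc q)" using eq by blast
      then show ?thesis using h by simp
    next
      assume h: "V q = V (Suc n) \<and> w = V n"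
      then have "q mod N = Suc n mod N" using eq by blast
      then have "Suc (q + N - 1) mod N = Suc n mod N" using assms(3) by simp
      then have "(q + N - 1) mod N = n mod N" using Suc_mod_cancel[OF assms(3)] by blast
      then have "V (q + N - 1) = V n" using eq by blast
      then show ?thesis using h by simp
    qed
  next
    assume "w = V (Suc q) \<or> w = V (q + N - 1)"
    then show "{V q, w} \<in> edges V N"
    proof
      assume w: "w = V (Suc q)"
      have "V q = V (q mod N)" by (rule per_mod[OF assms(1)])
      moreover have "V (Suc q) = V (Suc (q mod N))"
        by (rule per_modeq[OF assms(1)]) (simp add: mod_Suc_eq)
      ultimately have "{V q, w} = (\<lambda>n. {V n, V (Suc n)}) (q mod N)" using w by simp
      moreover have "q mod N \<in> {0..<N}" using assms(3) by simp
      ultimately show ?thesis unfolding edges_def by blast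
    next
      assume w: "w = V (q + N - 1)"
      let ?n = "(q + N - 1) mod N"
      have "Suc ?n mod N = q mod N" using assms(3) by (simp add: mod_Suc_eq)
      then have "V (Suc ?n) = V q" by (rule per_modeq[OF assms(1)])
      moreover have "V ?n = w" using w per_mod[OF assms(1), of "q + N - 1"] by simp
      ultimately have "{V q, w} = (\<lambda>n. {V n, V (Suc n)}) ?n" by auto
      moreover have "?n \<in> {0..<N}" using assms(3) by simp
      ultimately show ?thesis unfolding edges_def by blast
    qed
  qed
  then show ?thesis by auto
qed


lemma per_add: "isperV V N \<Longrightarrow> V (a + N) = V a"
  by (simp add: isperV_def)

lemma walk_follow:
  assumes pV: "isperV V N" and pV': "isperV V' N" and iV: "inj_on V {0..<N}" and iV': "inj_on V' {0..<N}"
    and N: "N \<ge> 3" and E: "edges V' N = edges V N"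
    and H: "\<And>k. {V (Suc (\<sigma> (Suc k))), V (\<sigma> (Suc k) + N - 1)} = {V (\<sigma> k), V (\<sigma> (Suc (Suc k)))}"
    and b0: "V' 0 = V (\<sigma> 0)" and b1: "V' 1 = V (\<sigma> 1)"
  shows "V' k = V (\<sigma> k)"
proof -
  have N0: "N > 0" using N by simp
  have "V' k = V (\<sigma> k) \<and> V' (Suc k) = V (\<sigma> (Suc k))" for k
  proof (induction k)
    case 0 then show ?case using b0 b1 by simp
  next
    case (Suc k)
    then have ih: "V' k = V (\<sigma> k)" "V' (Suc k) = V (\<sigma> (Suc k))" by auto
    have "V' (Suc (Suc k)) \<in> {w. {V' (Suc k), w} \<in> edges V' N}"
      using nbrs[OF pV' iV' N0, of "Suc k"] by simp
    also have "\<dots> = {w. {V (\<sigma> (Suc k)), w} \<in> edges V N}" using ih E by simp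
    also have "\<dots> = {V (\<sigma> k), V (\<sigma> (Suc (Suc k)))}"
      using nbrs[OF pV iV N0, of "\<sigma> (Suc k)"] H[of k] by simp
    finally have m: "V' (Suc (Suc k)) \<in> {V (\<sigma> k), V (\<sigma> (Suc (Suc k)))}" .
    have "Suc (Suc k) mod N \<noteq> k mod N"
    proof
      assume "Suc (Suc k) mod N = k mod N"
      then have "N dvd (Suc (Suc k) - k)" using mod_eq_dvd_iff_nat[of k "Suc (Suc k)" N] by simp
      then have "N dvd 2" by simp
      then have "N \<le> 2" by (rule dvd_imp_le) simp
      then show False using N by simp
    qed
    then have "V' (Suc (Suc k)) \<noteq> V' k" using V_eq_iff[OF pV' iV' N0] by blast
    then show ?case using m ih by auto
  qed
  then show ?thesis by blast
qed


lemma rigid: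
  assumes pV: "isperV V N" and pV': "isperV V' N" and iV: "inj_on V {0..<N}" and iV': "inj_on V' {0..<N}"
    and N: "N \<ge> 3" and E: "edges V' N = edges V N"
  shows "\<exists>p<N. (\<forall>k. V' k = V (p + k)) \<or> (\<forall>k. V' k = V (p + (N - 1) * k))"
proof -
  have N0: "N > 0" using N by simp
  have "{V' 0, V' (Suc 0)} \<in> edges V' N" unfolding edges_def using N0 by auto
  then obtain n where n: "n < N" "{V' 0, V' (Suc 0)} = {V n, V (Suc n)}"
    unfolding E unfolding edges_def by auto
  then have "(V' 0 = V n \<and> V' 1 = V (Suc n)) \<or> (V' 0 = V (Suc n) \<and> V' 1 = V n)"
    by (simp add: doubleton_eq_iff)
  then show ?thesis
  proof
    assume h: "V' 0 = V n \<and> V' 1 = V (Suc n)"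
    have H: "{V (Suc ((\<lambda>k. n + k) (Suc k))), V ((\<lambda>k. n + k) (Suc k) + N - 1)} =
        {V ((\<lambda>k. n + k) k), V ((\<lambda>k. n + k) (Suc (Suc k)))}" for k
    proof -
      have "n + Suc k + N - 1 = (n + k) + N" using N0 by simp
      then have "V (n + Suc k + N - 1) = V (n + k)" using per_add[OF pV] by simp
      then show ?thesis by auto
    qed
    have "V' k = V (n + k)" for k
      using walk_follow[OF pV pV' iV iV' N E, of "\<lambda>k. n + k", OF H] h by simp
    then show ?thesis using n(1) by blast
  next
    assume h: "V' 0 = V (Suc n) \<and> V' 1 = V n"
    define p where "p = Suc n mod N"
    have p: "p < N" using N0 by (simp add: p_def)
    have vp: "V p = V (Suc n)" unfolding p_def using per_mod[OF pV, of "Suc n"] by simp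
    have H: "{V (Suc ((\<lambda>k. p + (N - 1) * k) (Suc k))), V ((\<lambda>k. p + (N - 1) * k) (Suc k) + N - 1)} =
        {V ((\<lambda>k. p + (N - 1) * k) k), V ((\<lambda>k. p + (N - 1) * k) (Suc (Suc k)))}" for k
    proof -
      have a1: "Suc (p + (N - 1) * Suc k) = (p + (N - 1) * k) + N" using N0 by (cases N) (simp_all add: algebra_simps)
      have a2: "p + (N - 1) * Suc k + N - 1 = p + (N - 1) * Suc (Suc k)" using N0 by (cases N) (simp_all add: algebra_simps)
      show ?thesis unfolding a1 a2 using per_add[OF pV] by auto
    qed
    have b1: "V (p + (N - 1) * 1) = V n"
    proof (rule per_modeq[OF pV])
      have "p + (N - 1) * 1 = Suc n mod N + (N - 1)" by (simp add: p_def)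
      then have "(p + (N - 1) * 1) mod N = (Suc n + (N - 1)) mod N" by (simp add: mod_add_left_eq)
      also have "Suc n + (N - 1) = n + N" using N0 by simp
      finally show "(p + (N - 1) * 1) mod N = n mod N" by simp
    qed
    have "V' k = V (p + (N - 1) * k)" for k
      using walk_follow[OF pV pV' iV iV' N E, of "\<lambda>k. p + (N - 1) * k", OF H] h vp b1 by simp
    then show ?thesis using p by blast
  qed
qed


definition dd :: "(nat \<Rightarrow> nat \<Rightarrow> int) \<Rightarrow> (nat\<times>nat) list \<Rightarrow> nat \<Rightarrow> int" where
 "dd s L u = s (ch_i L (Suc u)) (ch_j L u) - s (ch_i L u) (ch_j L u)"
definition DD :: "(nat \<Rightarrow> nat \<Rightarrow> int) \<Rightarrow> (nat\<times>nat) list \<Rightarrow> nat \<Rightarrow> int" where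
 "DD s L t = (\<Sum>u<t. dd s L u)"

lemma walk_x_closed: "walk_x m s L r t = (r + DD s L t) mod m"
proof (induction t)
  case 0 then show ?case by (simp add: DD_def)
next
  case (Suc t)
  have "walk_x m s L r (Suc t) = ((r + DD s L t) mod m - s (ch_i L t) (ch_j L t) + s (ch_i L (Suc t)) (ch_j L t)) mod m"
    using Suc by simp
  also have "\<dots> = (r + DD s L t - s (ch_i L t) (ch_j L t) + s (ch_i L (Suc t)) (ch_j L t)) mod m"
    by (metis mod_add_left_eq mod_diff_left_eq)
  also have "\<dots> = (r + DD s L (Suc t)) mod m" by (simp add: DD_def dd_def algebra_simps)
  finally show ?case .
qed

definition isper :: "(nat\<times>nat) list \<Rightarrow> nat \<Rightarrow> bool" where
 "isper L t \<longleftrightarrow> (\<forall>u. L ! ((u + t) mod length L) = L ! (u mod length L))"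

lemma isper_ch: "isper L t \<Longrightarrow> ch_i L (u + t) = ch_i L u \<and> ch_j L (u + t) = ch_j L u"
  by (simp add: isper_def ch_i_def ch_j_def)

lemma isper_dd: "isper L t \<Longrightarrow> dd s L (t + u) = dd s L u"
  using isper_ch[of L t u] isper_ch[of L t "Suc u"] by (simp add: dd_def add.commute)

lemma DD_shift: "isper L t \<Longrightarrow> DD s L (t + k) = DD s L t + DD s L k"
proof (induction k)
  case 0 then show ?case by (simp add: DD_def)
next
  case (Suc k)
  then show ?case using isper_dd[OF Suc(2), of s k] by (simp add: DD_def)
qed

lemma isper_len: "isper L (length L)"
  by (simp add: isper_def)

lemma isper_0: "isper L 0"
  by (simp add: isper_def)

lemma isper_add: "isper L a \<Longrightarrow> isper L b \<Longrightarrow> isper L (a + b)"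
  unfolding isper_def by (metis add.assoc)

lemma isper_mult: "isper L e \<Longrightarrow> isper L (a*e)"
  by (induction a) (simp_all add: isper_0 isper_add)

lemma isper_diff: "isper L a \<Longrightarrow> isper L b \<Longrightarrow> b \<le> a \<Longrightarrow> isper L (a - b)"
  unfolding isper_def by (metis le_add_diff_inverse2 add.assoc)

lemma isper_mod: "isper L a \<Longrightarrow> isper L e \<Longrightarrow> isper L (a mod e)"
proof -
  assume a: "isper L a" and e: "isper L e"
  have "a mod e = a - (a div e) * e" by (simp add: minus_div_mult_eq_mod)
  moreover have "(a div e) * e \<le> a" by simp
  ultimately show ?thesis using isper_diff[OF a isper_mult[OF e]] by simp
qed

lemma ch_i_mod: "ch_i L (t mod length L) = ch_i L t" and ch_j_mod: "ch_j L (t mod length L) = ch_j L t"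
  by (simp_all add: ch_i_def ch_j_def)

lemma ch_i_Suc_mod: "ch_i L (Suc (t mod length L)) = ch_i L (Suc t)"
  by (simp add: ch_i_def mod_Suc_eq)


lemma DD_len_mod:
  assumes "is_cycle_chain m B s L" shows "DD s L (length L) mod m = 0"
proof -
  have "(\<Sum>t<length L. s (ch_i L t) (ch_j L t) - s (ch_i L (Suc t)) (ch_j L t)) = - DD s L (length L)"
    by (simp add: DD_def dd_def sum_negf[symmetric])
  then have "(- DD s L (length L)) mod m = 0" using assms unfolding is_cycle_chain_def by simp
  then show ?thesis by (simp add: mod_eq_0_iff_dvd)
qed

lemma walk_x_mod: "walk_x m s L (r mod m) t = walk_x m s L r t"
  by (simp add: walk_x_closed mod_add_left_eq)

lemma walk_vertex_mod: "walk_vertex m s L (r mod m) n = walk_vertex m s L r n"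
  by (simp add: walk_vertex_def walk_y_def walk_x_mod)

lemma wx_shift: assumes "isper L t"
  shows "walk_x m s L (walk_x m s L r t) k = walk_x m s L r (t + k)"
proof -
  have "walk_x m s L (walk_x m s L r t) k = ((r + DD s L t) mod m + DD s L k) mod m"
    by (simp add: walk_x_closed)
  also have "\<dots> = (r + DD s L t + DD s L k) mod m" by (simp add: mod_add_left_eq)
  also have "\<dots> = walk_x m s L r (t + k)" by (simp add: walk_x_closed DD_shift[OF assms] add.assoc)
  finally show ?thesis .
qed

lemma wv_shift: assumes "isper L t"
  shows "walk_vertex m s L (walk_x m s L r t) n = walk_vertex m s L r (2 * t + n)"
proof -
  have d: "(2 * t + n) div 2 = t + n div 2" by simp
  have c: "ch_i L (t + n div 2) = ch_i L (n div 2)" "ch_j L (t + n div 2) = ch_j L (n div 2)"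
    using isper_ch[OF assms, of "n div 2"] by (simp_all add: add.commute)
  show ?thesis unfolding walk_vertex_def walk_y_def d using c wx_shift[OF assms] by simp
qed

lemma wv_per: assumes "is_cycle_chain m B s L"
  shows "isperV (walk_vertex m s L r) (2 * length L)"
  unfolding isperV_def
proof
  fix n
  have "walk_x m s L r (length L) = r mod m"
    using DD_len_mod[OF assms] by (simp add: walk_x_closed mod_add_right_eq[symmetric])
  then have "walk_vertex m s L (r mod m) n = walk_vertex m s L r (2 * length L + n)"
    using wv_shift[OF isper_len[of L], where m=m and s=s and r=r and n=n] by simp
  then show "walk_vertex m s L r (n + 2 * length L) = walk_vertex m s L r n"
    by (simp add: walk_vertex_mod add.commute)
qed

lemma traced_edges: assumes "is_cycle_chain m B s L"
  shows "traced_cycle m s L r = edges (walk_vertex m s L r) (2 * length L)"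
proof -
  have "walk_vertex m s L r (Suc n mod (2 * length L)) = walk_vertex m s L r (Suc n)" for n
    using per_mod[OF wv_per[OF assms], of r "Suc n"] by simp
  then show ?thesis unfolding traced_cycle_def edges_def by simp
qed

fun vtype :: "vertex \<Rightarrow> nat + nat" where
  "vtype (CNode i x) = Inl i" | "vtype (UNode j y) = Inr j"

definition ctyp :: "(nat \<times> nat) list \<Rightarrow> nat \<Rightarrow> nat + nat" where
  "ctyp L n = (if even n then Inl (ch_i L (n div 2)) else Inr (ch_j L (n div 2)))"

lemma vtype_wv: "vtype (walk_vertex m s L r n) = ctyp L n"
  by (simp add: walk_vertex_def ctyp_def)

lemma chain_typ: assumes "is_cycle_chain m B s L" shows "ctyp L n \<noteq> ctyp L (Suc (Suc n))"
proof -
  let ?t = "(n div 2) mod length L"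
  have l: "length L > 0" using assms unfolding is_cycle_chain_def by auto
  have t: "?t < length L" using l by simp
  have ci: "ch_i L (n div 2) \<noteq> ch_i L (Suc (n div 2))"
    using assms t unfolding is_cycle_chain_def by (metis ch_i_mod ch_i_Suc_mod)
  have cj: "ch_j L (n div 2) \<noteq> ch_j L (Suc (n div 2))"
  proof -
    have "ch_j L ?t \<noteq> ch_j L (Suc ?t)" using assms t unfolding is_cycle_chain_def by blast
    moreover have "ch_j L (Suc ?t) = ch_j L (Suc (n div 2))" by (simp add: ch_j_def mod_Suc_eq)
    ultimately show ?thesis by (simp add: ch_j_mod)
  qed
  have "Suc (Suc n) div 2 = Suc (n div 2)" by simp
  then show ?thesis using ci cj by (simp add: ctyp_def)
qed


lemma cp_eq: "chain_period L = (LEAST e. 1 \<le> e \<and> e \<le> length L \<and> isper L e)"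
  unfolding chain_period_def isper_def by simp

lemma cp_props: assumes "length L > 0"
  shows "1 \<le> chain_period L \<and> chain_period L \<le> length L \<and> isper L (chain_period L)"
  unfolding cp_eq
  by (rule LeastI[of _ "length L"]) (use assms isper_len in \<open>auto simp: Suc_le_eq\<close>)

lemma cp_min: "1 \<le> e' \<Longrightarrow> e' \<le> length L \<Longrightarrow> isper L e' \<Longrightarrow> chain_period L \<le> e'"
  unfolding cp_eq by (rule Least_le) simp

lemma cp_dvd: assumes "length L > 0" "isper L t" shows "chain_period L dvd t"
proof (rule ccontr)
  let ?e = "chain_period L"
  assume nd: "\<not> ?e dvd t"
  have P: "1 \<le> ?e" "?e \<le> length L" "isper L ?e" using cp_props[OF assms(1)] by auto
  have "isper L (t mod ?e)" by (rule isper_mod[OF assms(2) P(3)])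
  moreover have "1 \<le> t mod ?e" using nd by (simp add: dvd_eq_mod_eq_0)
  moreover have "t mod ?e < ?e" using P(1) by simp
  ultimately have "?e \<le> t mod ?e" using P(2) by (intro cp_min) auto
  then show False using \<open>t mod ?e < ?e\<close> by simp
qed


lemma nat_id1: "l \<ge> 1 \<Longrightarrow> 2 * Suc t' + (2 * l - 1) * t' = Suc (Suc t') + 2 * l * t'"
  by (cases l) (simp_all add: algebra_simps)

lemma nat_id2: "l \<ge> 2 \<Longrightarrow> (2 * l - 1) * (l - 1) = Suc (Suc (l - 1)) + 2 * l * (l - 2)"
proof -
  assume "l \<ge> 2"
  then obtain k where k: "l = Suc (Suc k)" by (metis add_2_eq_Suc le_Suc_ex)
  show ?thesis unfolding k by (simp add: algebra_simps)
qed

lemma fiber: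
  assumes m: "m \<ge> 1" and al: "allowable m B s L" and r: "r \<in> {0..<m}"
  shows "{r' \<in> {0..<m}. traced_cycle m s L r' = traced_cycle m s L r}
       = (\<lambda>a. walk_x m s L r (a * chain_period L)) ` {0..<chain_n L}"
proof -
  define l where "l = length L"
  define e where "e = chain_period L"
  define n where "n = chain_n L"
  define N where "N = 2 * l"
  have cc: "is_cycle_chain m B s L" using al unfolding allowable_def by simp
  have l2: "l \<ge> 2" using cc unfolding is_cycle_chain_def l_def by simp
  have N3: "N \<ge> 3" using l2 unfolding N_def by simp
  have N0: "N > 0" using N3 by simp
  have L0: "length L > 0" using l2 unfolding l_def by linarith
  then have ep: "1 \<le> e" "e \<le> l" "isper L e" using cp_props[of L] unfolding e_def l_def by auto
  have edl: "e dvd l" using cp_dvd[OF L0 isper_len[of L]] unfolding e_def l_def by simp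
  have lne: "l = n * e" using edl unfolding n_def chain_n_def e_def l_def by simp
  have pV: "isperV (walk_vertex m s L r0) N" for r0
    using wv_per[OF cc] unfolding N_def l_def by simp
  have iV: "r0 \<in> {0..<m} \<Longrightarrow> inj_on (walk_vertex m s L r0) {0..<N}" for r0
    using al unfolding allowable_def N_def l_def by blast
  have TE: "traced_cycle m s L r0 = edges (walk_vertex m s L r0) N" for r0
    using traced_edges[OF cc] unfolding N_def l_def by simp
  have ctyp_eq: "a mod N = b mod N \<Longrightarrow> ctyp L a = ctyp L b" for a b
    using per_modeq[OF pV[of r]] vtype_wv by metis
  show ?thesis unfolding e_def[symmetric] n_def[symmetric]
  proof
    show "(\<lambda>a. walk_x m s L r (a * e)) ` {0..<n} \<subseteq> {r' \<in> {0..<m}. traced_cycle m s L r' = traced_cycle m s L r}"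
    proof
      fix x assume "x \<in> (\<lambda>a. walk_x m s L r (a * e)) ` {0..<n}"
      then obtain a where a: "x = walk_x m s L r (a * e)" by auto
      have "x \<in> {0..<m}" using m unfolding a by (simp add: walk_x_closed)
      moreover have "walk_vertex m s L x = (\<lambda>k. walk_vertex m s L r (2 * (a * e) + k))"
        using wv_shift[OF isper_mult[OF ep(3)]] unfolding a by auto
      then have "traced_cycle m s L x = traced_cycle m s L r"
        unfolding TE using edges_shift[OF pV N0] by simp
      ultimately show "x \<in> {r' \<in> {0..<m}. traced_cycle m s L r' = traced_cycle m s L r}" by simp
    qed
  next
    show "{r' \<in> {0..<m}. traced_cycle m s L r' = traced_cycle m s L r} \<subseteq> (\<lambda>a. walk_x m s L r (a * e)) ` {0..<n}"
    proof
      fix r' assume "r' \<in> {r' \<in> {0..<m}. traced_cycle m s L r' = traced_cycle m s L r}"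
      then have r': "r' \<in> {0..<m}" and T: "traced_cycle m s L r' = traced_cycle m s L r" by auto
      let ?V = "walk_vertex m s L r" and ?V' = "walk_vertex m s L r'"
      have E: "edges ?V' N = edges ?V N" using T TE by simp
      obtain p where p: "p < N" and cs: "(\<forall>k. ?V' k = ?V (p + k)) \<or> (\<forall>k. ?V' k = ?V (p + (N - 1) * k))"
        using rigid[OF pV pV iV[OF r] iV[OF r'] N3 E] by blast
      have "ctyp L p = ctyp L 0"
      proof -
        have "?V' 0 = ?V p" using cs by auto
        then show ?thesis using vtype_wv by metis
      qed
      then have "even p" by (simp add: ctyp_def split: if_splits)
      then obtain t where t: "p = 2 * t" by (elim evenE)
      have tl: "t < l" using p t unfolding N_def by simp
      from cs show "r' \<in> (\<lambda>a. walk_x m s L r (a * e)) ` {0..<n}"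
      proof
        assume fw: "\<forall>k. ?V' k = ?V (p + k)"
        have ty: "ctyp L k = ctyp L (2 * t + k)" for k
          using fw t vtype_wv by metis
        have "isper L t" unfolding isper_def
        proof
          fix u
          have "ctyp L (2 * u) = ctyp L (2 * t + 2 * u)" by (rule ty)
          then have i: "ch_i L u = ch_i L (u + t)" by (simp add: ctyp_def add.commute)
          have "ctyp L (2 * u + 1) = ctyp L (2 * t + (2 * u + 1))" by (rule ty)
          moreover have "(2 * t + (2 * u + 1)) div 2 = u + t" by simp
          moreover have "(2 * u + 1) div 2 = u" by simp
          ultimately have j: "ch_j L u = ch_j L (u + t)" by (simp add: ctyp_def add.commute)
          show "L ! ((u + t) mod length L) = L ! (u mod length L)"
            using i j unfolding ch_i_def ch_j_def by (simp add: prod_eq_iff)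
        qed
        then have "e dvd t" using cp_dvd[OF L0] unfolding e_def by simp
        then obtain a where ta: "t = a * e" by (metis dvd_def mult.commute)
        have an: "a < n" using tl ta lne ep(1) by (simp add: mult_less_cancel2)
        have "?V' 0 = ?V (2 * t)" using fw t by simp
        then have "walk_x m s L r' 0 = walk_x m s L r t" by (simp add: walk_vertex_def)
        moreover have "walk_x m s L r' 0 = r'" using r' by simp
        ultimately show ?thesis using ta an by auto
      next
        assume bw: "\<forall>k. ?V' k = ?V (p + (N - 1) * k)"
        have ty: "ctyp L k = ctyp L (p + (N - 1) * k)" for k
          using bw vtype_wv by metis
        obtain k where k: "(p + (N - 1) * k) mod N = Suc (Suc k) mod N"
        proof (cases t)
          case 0
          have "p + (N - 1) * (l - 1) = Suc (Suc (l - 1)) + N * (l - 2)"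
            using nat_id2[OF l2] 0 t unfolding N_def by simp
          then have "(p + (N - 1) * (l - 1)) mod N = Suc (Suc (l - 1)) mod N" by (simp only:) (rule mod_mult_self2)
          then show ?thesis using that by blast
        next
          case (Suc t')
          have "p + (N - 1) * t' = Suc (Suc t') + N * t'"
            using nat_id1[of l t'] l2 Suc t unfolding N_def by simp
          then have "(p + (N - 1) * t') mod N = Suc (Suc t') mod N" by (simp only:) (rule mod_mult_self2)
          then show ?thesis using that by blast
        qed
        have "ctyp L k = ctyp L (Suc (Suc k))" using ty[of k] ctyp_eq[OF k] by simp
        then show ?thesis using chain_typ[OF cc] by blast
      qed
    qed
  qed
qed


lemma fiber_card:
  assumes m: "m \<ge> 1" and al: "allowable m B s L" and r: "r \<in> {0..<m}"
  shows "card {r' \<in> {0..<m}. traced_cycle m s L r' = traced_cycle m s L r} = chain_n L"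
proof -
  define l where "l = length L"
  define e where "e = chain_period L"
  define n where "n = chain_n L"
  have cc: "is_cycle_chain m B s L" using al unfolding allowable_def by simp
  have l2: "l \<ge> 2" using cc unfolding is_cycle_chain_def l_def by simp
  have L0: "length L > 0" using l2 unfolding l_def by linarith
  then have ep: "1 \<le> e" "e \<le> l" "isper L e" using cp_props[of L] unfolding e_def l_def by auto
  have edl: "e dvd l" using cp_dvd[OF L0 isper_len[of L]] unfolding e_def l_def by simp
  have lne: "l = n * e" using edl unfolding n_def chain_n_def e_def l_def by simp
  have iV: "inj_on (walk_vertex m s L r) {0..<2 * l}"
    using al r unfolding allowable_def l_def by blast
  have "inj_on (\<lambda>a. walk_x m s L r (a * e)) {0..<n}"
  proof (rule inj_onI)
    fix a b assume a: "a \<in> {0..<n}" and b: "b \<in> {0..<n}"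
      and eq: "walk_x m s L r (a * e) = walk_x m s L r (b * e)"
    have vx: "walk_vertex m s L r (2 * (c * e)) = CNode (ch_i L 0) (walk_x m s L r (c * e))" for c
      using isper_ch[OF isper_mult[OF ep(3)], of 0 c] by (simp add: walk_vertex_def)
    have "walk_vertex m s L r (2 * (a * e)) = walk_vertex m s L r (2 * (b * e))"
      using vx eq by simp
    moreover have "a * e < l" "b * e < l" using a b lne ep(1) by (simp_all add: mult_less_cancel2)
    ultimately have "2 * (a * e) = 2 * (b * e)" using iV inj_onD by fastforce
    then show "a = b" using ep(1) by simp
  qed
  then show ?thesis using fiber[OF m al r] unfolding e_def n_def by (simp add: card_image)
qed

theorem mainTheorem8:
  fixes m :: int and B :: "nat set list" and s :: "nat \<Rightarrow> nat \<Rightarrow> int"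
    and L :: "(nat \<times> nat) list"
  assumes "m \<ge> 1"
    and "\<forall>j < length B. finite (B ! j)"
    and "allowable m B s L"
  shows "real (card (corresponding_cycles m s L)) = real_of_int m / real (chain_n L)"
proof -
  define S where "S = {0..<m}"
  define f where "f = traced_cycle m s L"
  have fin: "finite S" unfolding S_def by simp
  have "card S = (\<Sum>y\<in>f ` S. card {x\<in>S. f x = y})"
    using sum.image_gen[OF fin, of "\<lambda>_. 1::nat" f] by simp
  also have "\<dots> = (\<Sum>y\<in>f ` S. chain_n L)"
  proof (rule sum.cong)
    fix y assume "y \<in> f ` S"
    then obtain r where r: "r \<in> S" "y = f r" by auto
    show "card {x\<in>S. f x = y} = chain_n L"
      using fiber_card[OF assms(1,3), of r] r unfolding S_def f_def by simp
  qed simp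
  also have "\<dots> = card (f ` S) * chain_n L" by simp
  finally have c: "card S = card (f ` S) * chain_n L" .
  have "card S = nat m" unfolding S_def by simp
  then have "real_of_int m = real (card (f ` S)) * real (chain_n L)"
    using c assms(1) by (metis of_nat_mult of_int_of_nat_eq int_nat_eq add_nonneg_nonneg le_add_same_cancel2 less_le_trans zero_less_one le_less nat_0_le)
  moreover have "chain_n L > 0"
  proof -
    have cc: "is_cycle_chain m B s L" using assms(3) unfolding allowable_def by simp
    have l2: "length L \<ge> 2" using cc unfolding is_cycle_chain_def by simp
    have L0: "length L > 0" using l2 by linarith
    have ep: "1 \<le> chain_period L" "chain_period L \<le> length L" using cp_props[OF L0] by auto
    then show ?thesis unfolding chain_n_def using L0 by (simp add: div_greater_zero_iff)
  qed
  ultimately show ?thesis unfolding corresponding_cycles_def S_def[symmetric] f_def[symmetric] by simp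
qed

end
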